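(* Let $p\in(0,1)$, $\alpha\in(0,1]$, $0\le h_1<\dots<h_N\le1$, and nonnegative weights $f_0^S(h_j),f_0^{NS}(h_j)$, $j=1,\dots,N$, each summing to $1$; set $f_0(h_j)=\alpha f_0^S(h_j)+(1-\alpha)f_0^{NS}(h_j)$ with $f_0(h_N)>0$, and $f_0([h_i,1])=\sum_{j\ge i}f_0(h_j)$. Let $m_0^{S,j}\in[-1,1]$ be given. Let $f^{NS,1},\dots,f^{NS,N}\in C([0,+\infty),P([-1,1]))$ (weak topology) with initial data $f_0^{NS,i}$, write $m^{NS,j}(t)=\int_{-1}^1w\,f^{NS,j}(t,dw)$, $$m(t)=\alpha\sum_{j}f_0^S(h_j)m_0^{S,j}+(1-\alpha)\sum_jf_0^{NS}(h_j)m^{NS,j}(t),\quad \beta_i(t)=\alpha\sum_{j\ge i}f_0^S(h_j)m_0^{S,j}+(1-\alpha)\sum_{j\ge i}f_0^{NS}(h_j)m^{NS,j}(t),$$ and assume that for all $i$, $t\ge0$ and $\phi\in C^1([-1,1])$, $$\int\phi\,df^{NS,i}(t)=\int\phi\,df_0^{NS,i}+\int_0^t\!\!\int_{-1}^1\phi'(w)\Big[p\big(m(s)-w\big)+(1-p)\big(\beta_i(s)-f_0([h_i,1])w\big)\Big]f^{NS,i}(s,dw)\,ds.$$ Let $A=(A_{ij})$ be the $N\times N$ matrix with $A_{ii}=(1-\alpha)f_0^{NS}(h_i)-\big(p+(1-p)f_0([h_i,1])\big)$ and $A_{ij}=(1-\alpha)\big[p+(1-p)1_{\{j\ge i\}}\big]f_0^{NS}(h_j)$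 for $i\ne j$, and $B=(B_1,\dots,B_N)^T$ with $B_i=\alpha\sum_{j=1}^Nm_0^{S,j}\big(p+(1-p)1_{\{j\ge i\}}\big)f_0^S(h_j)$. Then $A$ is invertible and, with $(m_\infty^{NS,1},\dots,m_\infty^{NS,N})^T=-A^{-1}B$, we have $f^{NS,i}(t)\to\delta_{m_\infty^{NS,i}}$ weakly as $t\to+\infty$ for every $i=1,\dots,N$.
   Context: $P([-1,1])$ is the set of Borel probability measures on $[-1,1]$; $\delta_x$ is the Dirac mass at $x$. Interpretation: $f^{NS,i}(t)$ is the opinion distribution of non-stubborn individuals at hierarchy level $h_i$, $\alpha$ the fraction of stubborn individuals, $m_0^{S,j}$ the mean opinion of stubborn individuals at level $h_j$, $p$ the probability that a lower-ranked individual convinces a higher-ranked one. *)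

theory Defs
  imports "HOL-Probability.Probability" "Jordan_Normal_Form.Gauss_Jordan_Elimination"
begin

definition prob_on_interval :: "real measure \<Rightarrow> bool" where
  "prob_on_interval M \<longleftrightarrow> prob_space M \<and> sets M = sets borel \<and> emeasure M {-1..1} = 1"

definition dirac :: "real \<Rightarrow> real measure" where
  "dirac x = return borel x"

text \<open>Since all measures are concentrated
  on [-1,1], continuous functions on the real line give the same test class as C([-1,1]).\<close>
definition weak_conv_at_top :: "(real \<Rightarrow> real measure) \<Rightarrow> real measure \<Rightarrow> bool" where
  "weak_conv_at_top F \<mu> \<longleftrightarrow>
     (\<forall>\<phi>::real\<Rightarrow>real. continuous_on UNIV \<phi> \<longrightarrow>
        ((\<lambda>t. \<integral>w. \<phi> w \<partial>(F t)) \<longlongrightarrow> (\<integral>w. \<phi> w \<partial>\<mu>)) at_top)"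

definition weak_continuous_on :: "real set \<Rightarrow> (real \<Rightarrow> real measure) \<Rightarrow> bool" where
  "weak_continuous_on T F \<longleftrightarrow>
     (\<forall>\<phi>::real\<Rightarrow>real. continuous_on UNIV \<phi> \<longrightarrow> continuous_on T (\<lambda>t. \<integral>w. \<phi> w \<partial>(F t)))"

end

theory Submission imports Defs "Jordan_Normal_Form.Determinant" begin

lemma stab:
  fixes n :: nat and a :: "nat \<Rightarrow> nat \<Rightarrow> real" and x :: "nat \<Rightarrow> real \<Rightarrow> real"
  assumes offd: "\<And>i j. i<n \<Longrightarrow> j<n \<Longrightarrow> i\<noteq>j \<Longrightarrow> 0 \<le> a i j"
  and rows: "\<And>i. i<n \<Longrightarrow> (\<Sum>j<n. a i j) \<le> -\<gamma>" and gam: "0<\<gamma>"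
  and cont: "\<And>i. i<n \<Longrightarrow> continuous_on {0..} (x i)"
  and der: "\<And>i t. i<n \<Longrightarrow> 0<t \<Longrightarrow> (x i has_real_derivative (\<Sum>j<n. a i j * x j t)) (at t)"
  and Kpos: "0 < K" and K: "\<And>i. i<n \<Longrightarrow> x i 0 < K"
  shows "\<And>i t. i<n \<Longrightarrow> 0 \<le> t \<Longrightarrow> x i t < K * exp (-(\<gamma>/2) * t)"
proof (rule ccontr)
  fix i1 t1 assume i1: "i1 < n" "0 \<le> t1" and nt: "\<not> x i1 t1 < K * exp (-(\<gamma>/2) * t1)"
  define \<delta> where "\<delta> = \<gamma>/2"
  have dpos: "0 < \<delta>" "\<delta> < \<gamma>" using gam by (auto simp: \<delta>_def)
  define g where "g i t = x i t - K * exp (-\<delta> * t)" for i t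
  define S where "S = (\<Union>i\<in>{..<n}. {0..} \<inter> (g i) -` {0..})"
  have gc: "continuous_on {0..} (g i)" if "i<n" for i
    unfolding g_def by (intro continuous_intros cont that)
  have clS: "closed S" unfolding S_def
    by (intro closed_UN finite_lessThan ballI continuous_closed_preimage gc) auto
  have t1S: "t1 \<in> S" using i1 nt unfolding S_def g_def \<delta>_def by (auto intro!: bexI[of _ i1])
  have bdd: "bdd_below S" unfolding S_def by (auto intro!: bdd_belowI[of _ 0])
  define t0 where "t0 = Inf S"
  have t0S: "t0 \<in> S" unfolding t0_def using closed_contains_Inf[OF _ bdd clS] t1S by auto
  have below: "g j s < 0" if "j < n" "0 \<le> s" "s < t0" for j s
  proof (rule ccontr)
    assume "\<not> g j s < 0"
    hence "s \<in> S" using that unfolding S_def by (auto intro!: bexI[of _ j])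
    hence "t0 \<le> s" unfolding t0_def using bdd by (rule cInf_lower)
    thus False using that by simp
  qed
  obtain i where i: "i < n" "0 \<le> t0" "g i t0 \<ge> 0" using t0S unfolding S_def by auto
  have "t0 \<noteq> 0" using i K[OF i(1)] unfolding g_def by auto
  hence t0pos: "t0 > 0" using i by simp
  have gder: "(g j has_real_derivative (\<Sum>k<n. a j k * x k t0) + \<delta> * K * exp (-\<delta> * t0)) (at t0)" if "j<n" for j
    unfolding g_def[abs_def]
    by (rule derivative_eq_intros der[OF that t0pos] refl | simp)+ 
  have le0: "g j t0 \<le> 0" if j: "j<n" for j
  proof (rule ccontr)
    assume "\<not> g j t0 \<le> 0"
    hence gp: "0 < g j t0" by simp
    have "isCont (g j) t0" using gder[OF j] by (rule DERIV_isCont)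
    hence "g j \<midarrow>t0\<rightarrow> g j t0" by (simp add: isCont_def)
    then obtain r where r: "0 < r" "\<forall>s. s \<noteq> t0 \<and> \<bar>t0 - s\<bar> < r \<longrightarrow> 0 < g j s"
      using LIM_fun_gt_zero gp by blast
    define s where "s = t0 - min (r/2) (t0/2)"
    have "s \<noteq> t0 \<and> \<bar>t0 - s\<bar> < r" using r(1) t0pos unfolding s_def by auto
    hence "0 < g j s" using r(2) by blast
    moreover have "g j s < 0" using below[OF j, of s] r(1) t0pos unfolding s_def by auto
    ultimately show False by simp
  qed
  define E where "E = K * exp (-\<delta> * t0)"
  have Epos: "E > 0" using Kpos by (simp add: E_def)
  have xi: "x i t0 = E" using i le0[OF i(1)] unfolding g_def E_def by auto
  have xj: "x j t0 \<le> E" if "j<n" for j using le0[OF that] unfolding g_def E_def by auto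
  have "(\<Sum>k<n. a i k * x k t0) \<le> (\<Sum>k<n. a i k * E)"
  proof (rule sum_mono)
    fix k assume "k \<in> {..<n}"
    then show "a i k * x k t0 \<le> a i k * E"
      using xi xj[of k] offd[OF i(1), of k] by (cases "k = i") (auto intro: mult_left_mono)
  qed
  also have "\<dots> = (\<Sum>k<n. a i k) * E" by (simp add: sum_distrib_right)
  also have "\<dots> \<le> -\<gamma> * E" using rows[OF i(1)] Epos by (intro mult_right_mono) auto
  finally have "(\<Sum>k<n. a i k * x k t0) + \<delta> * K * exp (-\<delta> * t0) < 0"
    using dpos Epos unfolding E_def[symmetric] mult.assoc[symmetric]
  proof -
    assume "(\<Sum>k<n. a i k * x k t0) \<le> -\<gamma> * E"
    moreover have "\<delta> * E < \<gamma> * E" using dpos Epos by simp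
    ultimately show ?thesis unfolding E_def by (simp add: mult.assoc)
  qed
  from DERIV_neg_dec_left[OF gder[OF i(1)] this] obtain d where d: "d > 0" "\<forall>h>0. h < d \<longrightarrow> g i t0 < g i (t0 - h)" by blast
  define h where "h = min (d/2) (t0/2)"
  have "g i t0 < g i (t0 - h)" using d t0pos unfolding h_def by auto
  moreover have "g i (t0 - h) < 0" using below[OF i(1), of "t0 - h"] d t0pos unfolding h_def by auto
  ultimately show False using i by simp
qed


lemma poi_AE: assumes "prob_on_interval M" shows "AE w in M. w \<in> {-1..1}"
proof -
  interpret prob_space M using assms by (simp add: prob_on_interval_def)
  have ev: "{-1..1::real} \<in> sets M" using assms by (simp add: prob_on_interval_def)
  have "prob {-1..1} = 1" using assms by (simp add: prob_on_interval_def emeasure_eq_measure)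
  thus ?thesis using AE_in_set_eq_1[OF ev] by simp
qed

lemma poi_meas: assumes "prob_on_interval M" "continuous_on UNIV g"
  shows "(g::real\<Rightarrow>real) \<in> borel_measurable M"
proof -
  have "sets M = sets borel" using assms by (simp add: prob_on_interval_def)
  hence "borel_measurable M = borel_measurable borel" by (rule measurable_cong_sets) simp
  thus ?thesis using borel_measurable_continuous_onI[OF assms(2)] by blast
qed

lemma poi_int: assumes "prob_on_interval M" "continuous_on UNIV g"
  shows "integrable M (g::real\<Rightarrow>real)"
proof -
  interpret prob_space M using assms by (simp add: prob_on_interval_def)
  have "compact (g ` {-1..1})"
    by (rule compact_continuous_image) (auto intro: continuous_on_subset[OF assms(2)])
  then obtain B where B: "\<forall>y\<in>g ` {-1..1}. norm y \<le> B"
    using compact_imp_bounded bounded_iff by metis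
  have "AE w in M. norm (g w) \<le> B" using poi_AE[OF assms(1)] by eventually_elim (use B in auto)
  thus ?thesis by (rule integrable_const_bound) (rule poi_meas[OF assms])
qed

lemma unif_bound:
  fixes g :: "real \<Rightarrow> real"
  assumes "continuous_on UNIV g" "0 < \<epsilon>"
  shows "\<exists>C\<ge>0. \<forall>w\<in>{-1..1}. \<bar>g w - g x\<bar> \<le> \<epsilon> + C * (w - x)^2"
proof -
  define R where "R = \<bar>x\<bar> + 1"
  have cR: "continuous_on {-R..R} g" by (rule continuous_on_subset[OF assms(1)]) auto
  have uc: "uniformly_continuous_on {-R..R} g"
    by (rule compact_uniformly_continuous[OF cR]) simp
  then obtain \<eta> where eta: "\<eta> > 0" "\<forall>w\<in>{-R..R}. \<forall>y\<in>{-R..R}. dist y w < \<eta> \<longrightarrow> dist (g y) (g w) < \<epsilon>"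
    unfolding uniformly_continuous_on_def using assms(2) by blast
  have "compact (g ` {-R..R})" by (rule compact_continuous_image[OF cR]) simp
  hence "bounded (g ` {-R..R})" by (rule compact_imp_bounded)
  then obtain M where M: "\<forall>y\<in>g ` {-R..R}. norm y \<le> M"
    unfolding bounded_iff by blast
  have Mb: "\<bar>g w\<bar> \<le> M" if "w \<in> {-R..R}" for w
    using M that by simp
  have xR: "x \<in> {-R..R}" unfolding R_def by auto
  have M0: "0 \<le> M" using Mb[OF xR] by simp
  define C where "C = 2 * M / \<eta>^2"
  have C0: "C \<ge> 0" unfolding C_def using M0 by simp
  have "\<bar>g w - g x\<bar> \<le> \<epsilon> + C * (w - x)^2" if w: "w \<in> {-1..1}" for w
  proof -
    have wR: "w \<in> {-R..R}" using w unfolding R_def by auto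
    show ?thesis
    proof (cases "\<bar>w - x\<bar> < \<eta>")
      case True
      hence "dist w x < \<eta>" by (simp add: dist_real_def)
      hence "dist (g w) (g x) < \<epsilon>" using eta(2) wR xR by blast
      moreover have "0 \<le> C * (w - x)^2" using C0 by simp
      ultimately show ?thesis by (simp add: dist_real_def)
    next
      case False
      hence "\<eta> \<le> \<bar>w - x\<bar>" by simp
      hence "\<eta>^2 \<le> \<bar>w - x\<bar>^2" using eta(1) by (intro power_mono) auto
      hence "\<eta>^2 \<le> (w - x)^2" by simp
      hence "C * \<eta>^2 \<le> C * (w - x)^2" using C0 by (rule mult_left_mono)
      moreover have "C * \<eta>^2 = 2 * M" unfolding C_def using eta(1) by simp
      moreover have "\<bar>g w - g x\<bar> \<le> 2 * M" using Mb[OF wR] Mb[OF xR] by simp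
      ultimately show ?thesis using assms(2) by linarith
    qed
  qed
  thus ?thesis using C0 by blast
qed

lemma weak_from_moments:
  fixes \<mu> :: "real \<Rightarrow> real measure" and x :: real
  assumes ev: "eventually (\<lambda>t. prob_on_interval (\<mu> t)) at_top"
  and m1: "((\<lambda>t. \<integral>w. w \<partial>\<mu> t) \<longlongrightarrow> x) at_top"
  and m2: "((\<lambda>t. \<integral>w. w^2 \<partial>\<mu> t) \<longlongrightarrow> x^2) at_top"
  shows "weak_conv_at_top \<mu> (dirac x)"
  unfolding weak_conv_at_top_def
proof (intro allI impI)
  fix g :: "real \<Rightarrow> real" assume gc: "continuous_on UNIV g"
  have "(\<integral>w. g w \<partial>dirac x) = g x" unfolding dirac_def
    by (rule integral_return) (auto intro: borel_measurable_continuous_onI[OF gc])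
  moreover have "((\<lambda>t. \<integral>w. g w \<partial>\<mu> t) \<longlongrightarrow> g x) at_top"
  proof (rule tendstoI)
    fix e :: real assume e: "0 < e"
    obtain C where C: "C \<ge> 0" "\<forall>w\<in>{-1..1}. \<bar>g w - g x\<bar> \<le> e/2 + C * (w - x)^2"
      using unif_bound[OF gc, of "e/2" x] e by auto
    define h where "h t = e/2 + C * ((\<integral>w. w^2 \<partial>\<mu> t) - 2 * x * (\<integral>w. w \<partial>\<mu> t) + x^2)" for t
    have "(h \<longlongrightarrow> e/2 + C * (x^2 - 2 * x * x + x^2)) at_top"
      unfolding h_def by (intro tendsto_intros m1 m2)
    hence "(h \<longlongrightarrow> e/2) at_top" by (simp add: power2_eq_square)
    hence evh: "eventually (\<lambda>t. h t < e) at_top" by (rule order_tendstoD(2)) (use e in simp)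
    show "eventually (\<lambda>t. dist (\<integral>w. g w \<partial>\<mu> t) (g x) < e) at_top"
      using ev evh
    proof eventually_elim
      case (elim t)
      interpret prob_space "\<mu> t" using elim(1) by (simp add: prob_on_interval_def)
      have ig: "integrable (\<mu> t) g" by (rule poi_int[OF elim(1) gc])
      have i1: "integrable (\<mu> t) (\<lambda>w. w)" by (rule poi_int[OF elim(1)]) (intro continuous_intros)
      have i2: "integrable (\<mu> t) (\<lambda>w. w^2)" by (rule poi_int[OF elim(1)]) (intro continuous_intros)
      have ic: "integrable (\<mu> t) (\<lambda>w. c)" for c :: real by (rule integrable_const)
      have intc: "(\<integral>w. c \<partial>\<mu> t) = c" for c :: real by (simp only: lebesgue_integral_const prob_space) simp
      have i3: "integrable (\<mu> t) (\<lambda>w. 2 * x * w)" by (rule integrable_mult_right[OF i1])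
      have i4: "integrable (\<mu> t) (\<lambda>w. w^2 - 2 * x * w)" by (rule Bochner_Integration.integrable_diff[OF i2 i3])
      have i5: "integrable (\<mu> t) (\<lambda>w. w^2 - 2 * x * w + x^2)" by (rule Bochner_Integration.integrable_add[OF i4 ic])
      have i6: "integrable (\<mu> t) (\<lambda>w. C * (w^2 - 2 * x * w + x^2))" by (rule integrable_mult_right[OF i5])
      have i7: "integrable (\<mu> t) (\<lambda>w. e/2 + C * (w^2 - 2 * x * w + x^2))" by (rule Bochner_Integration.integrable_add[OF ic i6])
      have igd: "integrable (\<mu> t) (\<lambda>w. g w - g x)" by (rule Bochner_Integration.integrable_diff[OF ig ic])
      have "(\<integral>w. g w - g x \<partial>\<mu> t) = (\<integral>w. g w \<partial>\<mu> t) - g x"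
        by (simp only: Bochner_Integration.integral_diff[OF ig ic] intc)
      hence "\<bar>(\<integral>w. g w \<partial>\<mu> t) - g x\<bar> \<le> (\<integral>w. \<bar>g w - g x\<bar> \<partial>\<mu> t)"
        using integral_norm_bound[of "\<mu> t" "\<lambda>w. g w - g x"] by (simp only: real_norm_def)
      also have "\<dots> \<le> (\<integral>w. e/2 + C * (w^2 - 2 * x * w + x^2) \<partial>\<mu> t)"
      proof (rule integral_mono_AE)
        show "integrable (\<mu> t) (\<lambda>w. \<bar>g w - g x\<bar>)" by (rule integrable_abs[OF igd])
        show "integrable (\<mu> t) (\<lambda>w. e/2 + C * (w^2 - 2 * x * w + x^2))" by (rule i7)
        show "AE w in \<mu> t. \<bar>g w - g x\<bar> \<le> e/2 + C * (w^2 - 2 * x * w + x^2)"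
          using poi_AE[OF elim(1)]
        proof eventually_elim
          case (elim w)
          have eq: "(w - x)^2 = w^2 - 2 * x * w + x^2" by (simp add: power2_diff)
          have "\<bar>g w - g x\<bar> \<le> e/2 + C * (w - x)^2" using C(2) elim by blast
          thus ?case unfolding eq .
        qed
      qed
      also have "\<dots> = h t"
      proof -
        have "(\<integral>w. e/2 + C * (w^2 - 2 * x * w + x^2) \<partial>\<mu> t) = e/2 + C * ((\<integral>w. w^2 \<partial>\<mu> t) - (\<integral>w. 2 * x * w \<partial>\<mu> t) + x^2)"
          by (simp only: Bochner_Integration.integral_add[OF ic i6] integral_mult_right_zero Bochner_Integration.integral_add[OF i4 ic] Bochner_Integration.integral_diff[OF i2 i3] intc)
        also have "(\<integral>w. 2 * x * w \<partial>\<mu> t) = 2 * x * (\<integral>w. w \<partial>\<mu> t)" by (rule integral_mult_right_zero)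
        finally show ?thesis unfolding h_def by simp
      qed
      finally show ?case using elim(2) by (simp add: dist_real_def)
    qed
  qed
  ultimately show "((\<lambda>t. \<integral>w. g w \<partial>\<mu> t) \<longlongrightarrow> (\<integral>w. g w \<partial>dirac x)) at_top" by simp
qed


lemma exp_decay: "0 < c \<Longrightarrow> ((\<lambda>t::real. K * exp (-c * t)) \<longlongrightarrow> 0) at_top"
proof -
  assume c: "0 < c"
  have "filterlim (\<lambda>t::real. c * t) at_top at_top"
    by (rule filterlim_tendsto_pos_mult_at_top[OF tendsto_const c filterlim_ident])
  hence "filterlim (\<lambda>t::real. -(c * t)) at_bot at_top"
    by (simp add: filterlim_uminus_at_bot)
  hence "((\<lambda>t::real. exp (-(c * t))) \<longlongrightarrow> 0) at_top" by (rule filterlim_compose[OF exp_at_bot])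
  thus ?thesis by (intro tendsto_mult_right_zero) simp
qed

lemma stab_abs:
  fixes n :: nat and a :: "nat \<Rightarrow> nat \<Rightarrow> real" and x :: "nat \<Rightarrow> real \<Rightarrow> real"
  assumes offd: "\<And>i j. i<n \<Longrightarrow> j<n \<Longrightarrow> i\<noteq>j \<Longrightarrow> 0 \<le> a i j"
  and rows: "\<And>i. i<n \<Longrightarrow> (\<Sum>j<n. a i j) \<le> -\<gamma>" and gam: "0<\<gamma>"
  and cont: "\<And>i. i<n \<Longrightarrow> continuous_on {0..} (x i)"
  and der: "\<And>i t. i<n \<Longrightarrow> 0<t \<Longrightarrow> (x i has_real_derivative (\<Sum>j<n. a i j * x j t)) (at t)"
  and i: "i < n"
  shows "((\<lambda>t. x i t) \<longlongrightarrow> 0) at_top"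
proof -
  define K where "K = 1 + (\<Sum>j<n. \<bar>x j 0\<bar>)"
  have Kj: "\<bar>x j 0\<bar> < K" if "j < n" for j
  proof -
    have "\<bar>x j 0\<bar> \<le> (\<Sum>j<n. \<bar>x j 0\<bar>)" by (rule member_le_sum) (use that in auto)
    thus ?thesis unfolding K_def by simp
  qed
  have Kpos: "0 < K" unfolding K_def by (simp add: add_pos_nonneg sum_nonneg)
  have up: "x i t < K * exp (-(\<gamma>/2) * t)" if "0 \<le> t" for t
    by (rule stab[OF offd rows gam cont der Kpos _ i that]) (use Kj in force)+
  have down: "- x i t < K * exp (-(\<gamma>/2) * t)" if "0 \<le> t" for t
  proof (rule stab[where x="\<lambda>i t. - x i t", OF offd rows gam _ _ Kpos _ i that])
    show "continuous_on {0..} (\<lambda>t. - x j t)" if "j < n" for j using cont[OF that] by (intro continuous_intros)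
    show "((\<lambda>t. - x j t) has_real_derivative (\<Sum>k<n. a j k * - x k t)) (at t)" if "j < n" "0 < t" for j t
      using DERIV_minus[OF der[OF that]] by (simp add: sum_negf)
    show "- x j 0 < K" if "j < n" for j using Kj[OF that] by simp
  qed
  have "eventually (\<lambda>t. norm (x i t) \<le> K * exp (-(\<gamma>/2) * t)) at_top"
    using eventually_ge_at_top[of 0]
  proof eventually_elim
    case (elim t)
    show ?case using up[OF elim] down[OF elim] by (simp add: abs_le_iff)
  qed
  moreover have "((\<lambda>t. K * exp (-(\<gamma>/2) * t)) \<longlongrightarrow> 0) at_top" by (rule exp_decay) (use gam in simp)
  ultimately show ?thesis by (rule Lim_null_comparison)
qed

lemma ftc_deriv:
  fixes u G :: "real \<Rightarrow> real"
  assumes eq: "\<And>t. 0 \<le> t \<Longrightarrow> u t = u 0 + integral {0..t} G"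
  and Gc: "continuous_on {0..} G" and t: "0 < t"
  shows "(u has_real_derivative G t) (at t)"
proof -
  have "((\<lambda>s. integral {0..s} G) has_vector_derivative G t) (at t within {0..t+1})"
    by (rule integral_has_vector_derivative) (use t in \<open>auto intro: continuous_on_subset[OF Gc]\<close>)
  moreover have "at t within {0..t+1} = at t"
    by (rule at_within_interior) (use t in auto)
  ultimately have "((\<lambda>s. integral {0..s} G) has_real_derivative G t) (at t)"
    by (simp add: has_real_derivative_iff_has_vector_derivative)
  hence "((\<lambda>s. u 0 + integral {0..s} G) has_real_derivative G t) (at t)"
    using DERIV_add[OF DERIV_const[of "u 0" "at t"]] by simp
  thus ?thesis
  proof (rule has_field_derivative_transform_within_open[where S="{0<..}"])
    show "u 0 + integral {0..x} G = u x" if "x \<in> {0<..}" for x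
      using eq[of x] that by simp
  qed (use t in auto)
qed

lemma sum_ind:
  fixes g :: "nat \<Rightarrow> real"
  shows "(\<Sum>j<N. if i \<le> j then g j else 0) = (\<Sum>j\<in>{i..<N}. g j)"
proof -
  have e: "{j\<in>{..<N}. i \<le> j} = {i..<N}" by auto
  have "(\<Sum>j\<in>{j\<in>{..<N}. i \<le> j}. g j) = (\<Sum>j<N. if i \<le> j then g j else 0)"
    by (rule sum.inter_filter) simp
  thus ?thesis unfolding e by simp
qed

lemma sum_ind':
  fixes h :: "nat \<Rightarrow> real"
  shows "(\<Sum>j<N. (p + (1 - p) * (if i \<le> j then 1 else 0)) * h j) = p * (\<Sum>j<N. h j) + (1 - p) * (\<Sum>j\<in>{i..<N}. h j)"
proof -
  have "(p + (1 - p) * (if i \<le> j then 1 else 0)) * h j = p * h j + (if i \<le> j then (1 - p) * h j else 0)" for j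
    by (simp add: algebra_simps)
  hence "(\<Sum>j<N. (p + (1 - p) * (if i \<le> j then 1 else 0)) * h j) = (\<Sum>j<N. p * h j) + (\<Sum>j<N. if i \<le> j then (1 - p) * h j else 0)"
    by (simp add: sum.distrib)
  also have "(\<Sum>j<N. if i \<le> j then (1 - p) * h j else 0) = (\<Sum>j\<in>{i..<N}. (1 - p) * h j)" by (rule sum_ind)
  finally show ?thesis by (simp add: sum_distrib_left)
qed

theorem theorem4p6:
  fixes p \<alpha> :: real and N :: nat
    and h :: "nat \<Rightarrow> real"
    and fS fNS :: "nat \<Rightarrow> real"
    and mS :: "nat \<Rightarrow> real"
    and f0 :: "nat \<Rightarrow> real measure"
    and f :: "nat \<Rightarrow> real \<Rightarrow> real measure"
  defines "F0 \<equiv> (\<lambda>j. \<alpha> * fS j + (1 - \<alpha>) * fNS j)"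
  defines "F0up \<equiv> (\<lambda>i. \<Sum>j\<in>{i..<N}. F0 j)"
  defines "mNS \<equiv> (\<lambda>j t. \<integral>w. w \<partial>(f j t))"
  defines "m \<equiv> (\<lambda>t. \<alpha> * (\<Sum>j<N. fS j * mS j) + (1 - \<alpha>) * (\<Sum>j<N. fNS j * mNS j t))"
  defines "\<beta> \<equiv> (\<lambda>i t. \<alpha> * (\<Sum>j\<in>{i..<N}. fS j * mS j) + (1 - \<alpha>) * (\<Sum>j\<in>{i..<N}. fNS j * mNS j t))"
  defines "A \<equiv> mat N N (\<lambda>(i, j). if i = j
                 then (1 - \<alpha>) * fNS i - (p + (1 - p) * F0up i)
                 else (1 - \<alpha>) * (p + (1 - p) * (if j \<ge> i then 1 else 0)) * fNS j)"
  defines "B \<equiv> vec N (\<lambda>i. \<alpha> * (\<Sum>j<N. mS j * (p + (1 - p) * (if j \<ge> i then 1 else 0)) * fS j))"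
  assumes p: "0 < p" "p < 1"
    and alpha: "0 < \<alpha>" "\<alpha> \<le> 1"
    and h_mono: "\<And>i j. i < j \<Longrightarrow> j < N \<Longrightarrow> h i < h j"
    and h_range: "\<And>i. i < N \<Longrightarrow> 0 \<le> h i \<and> h i \<le> 1"
    and fS_nonneg: "\<And>j. j < N \<Longrightarrow> 0 \<le> fS j"
    and fNS_nonneg: "\<And>j. j < N \<Longrightarrow> 0 \<le> fNS j"
    and fS_sum: "(\<Sum>j<N. fS j) = 1"
    and fNS_sum: "(\<Sum>j<N. fNS j) = 1"
    and last_pos: "F0 (N - 1) > 0"
    and mS_range: "\<And>j. j < N \<Longrightarrow> -1 \<le> mS j \<and> mS j \<le> 1"
    and f0_prob: "\<And>i. i < N \<Longrightarrow> prob_on_interval (f0 i)"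
    and f_prob: "\<And>i t. i < N \<Longrightarrow> 0 \<le> t \<Longrightarrow> prob_on_interval (f i t)"
    and f_cont: "\<And>i. i < N \<Longrightarrow> weak_continuous_on {0..} (f i)"
    and f_init: "\<And>i. i < N \<Longrightarrow> f i 0 = f0 i"
    and f_eq: "\<And>i t \<phi> \<phi>'. i < N \<Longrightarrow> 0 \<le> t \<Longrightarrow>
        (\<forall>w. (\<phi> has_real_derivative \<phi>' w) (at w)) \<Longrightarrow> continuous_on UNIV \<phi>' \<Longrightarrow>
        (\<integral>w. \<phi> w \<partial>(f i t)) = (\<integral>w. \<phi> w \<partial>(f0 i)) +
          integral {0..t} (\<lambda>s. \<integral>w. \<phi>' w * (p * (m s - w) + (1 - p) * (\<beta> i s - F0up i * w)) \<partial>(f i s))"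
  shows "invertible_mat A \<and>
         (let minf = - (the (mat_inverse A) *\<^sub>v B)
          in \<forall>i<N. weak_conv_at_top (f i) (dirac (minf $ i)))"
proof -
  have N0: "N > 0" using fS_sum by (cases N) auto
  define c where "c i = p + (1 - p) * F0up i" for i
  define a where "a i j = (if i = j then (1 - \<alpha>) * fNS i - c i
                 else (1 - \<alpha>) * (p + (1 - p) * (if j \<ge> i then 1 else 0)) * fNS j)" for i j
  define Bv where "Bv i = \<alpha> * (\<Sum>j<N. mS j * (p + (1 - p) * (if j \<ge> i then 1 else 0)) * fS j)" for i
  define Q where "Q j t = (\<integral>w. w^2 \<partial>(f j t))" for j t
  define P where "P i s = p * m s + (1 - p) * \<beta> i s" for i s
  define G where "G i s = P i s - c i * mNS i s" for i s
  define H where "H i s = 2 * P i s * mNS i s - 2 * c i * Q i s" for i s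
  have Acar: "A \<in> carrier_mat N N" by (simp add: A_def)
  have Aij: "A $$ (i, j) = a i j" if "i < N" "j < N" for i j
    using that by (simp add: A_def a_def c_def)
  have Bcar: "B \<in> carrier_vec N" by (simp add: B_def)
  have Bi: "B $ i = Bv i" if "i < N" for i using that by (simp add: B_def Bv_def)
  have F0up_nonneg: "0 \<le> F0up i" for i
    unfolding F0up_def F0_def using alpha fS_nonneg fNS_nonneg
    by (intro sum_nonneg) (auto intro!: add_nonneg_nonneg mult_nonneg_nonneg)
  have cpos: "c i \<ge> p" for i unfolding c_def using p F0up_nonneg[of i] by simp
  have offd: "0 \<le> a i j" if "i < N" "j < N" "i \<noteq> j" for i j
    unfolding a_def using that p alpha fNS_nonneg[of j] by (auto intro!: mult_nonneg_nonneg)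
  have a_sum: "(\<Sum>j<N. a i j * y j) = (1 - \<alpha>) * (p * (\<Sum>j<N. fNS j * y j) + (1 - p) * (\<Sum>j\<in>{i..<N}. fNS j * y j)) - c i * y i"
    if i: "i < N" for i and y :: "nat \<Rightarrow> real"
  proof -
    have "a i j * y j = (1 - \<alpha>) * p * (fNS j * y j) + (if i \<le> j then (1 - \<alpha>) * (1 - p) * (fNS j * y j) else 0)
           - (if j = i then c i * y i else 0)" for j
      unfolding a_def by (auto simp: algebra_simps)
    hence "(\<Sum>j<N. a i j * y j) = (\<Sum>j<N. (1 - \<alpha>) * p * (fNS j * y j)) + (\<Sum>j<N. if i \<le> j then (1 - \<alpha>) * (1 - p) * (fNS j * y j) else 0)
           - (\<Sum>j<N. if j = i then c i * y i else 0)"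
      by (simp add: sum.distrib sum_subtractf)
    also have "(\<Sum>j<N. if i \<le> j then (1 - \<alpha>) * (1 - p) * (fNS j * y j) else 0) = (\<Sum>j\<in>{i..<N}. (1 - \<alpha>) * (1 - p) * (fNS j * y j))"
      by (rule sum_ind)
    also have "(\<Sum>j<N. if j = i then c i * y i else 0) = c i * y i" using i by simp
    finally show ?thesis by (simp add: sum_distrib_left algebra_simps)
  qed
  have rows: "(\<Sum>j<N. a i j) \<le> - (\<alpha> * p)" if i: "i < N" for i
  proof -
    have s1: "(\<Sum>j<N. a i j) = (1 - \<alpha>) * (p + (1 - p) * (\<Sum>j\<in>{i..<N}. fNS j)) - c i"
      using a_sum[OF i, of "\<lambda>_. 1"] fNS_sum by simp
    have F0eq: "F0up i = \<alpha> * (\<Sum>j\<in>{i..<N}. fS j) + (1 - \<alpha>) * (\<Sum>j\<in>{i..<N}. fNS j)"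
      unfolding F0up_def F0_def by (simp add: sum.distrib sum_distrib_left)
    have "(\<Sum>j<N. a i j) = - (\<alpha> * p) - (1 - p) * (\<alpha> * (\<Sum>j\<in>{i..<N}. fS j))"
      unfolding s1 c_def F0eq by (simp add: algebra_simps)
    moreover have "0 \<le> (1 - p) * (\<alpha> * (\<Sum>j\<in>{i..<N}. fS j))"
      using p alpha fS_nonneg by (intro mult_nonneg_nonneg sum_nonneg) auto
    ultimately show ?thesis by linarith
  qed
  have gam: "0 < \<alpha> * p" using p alpha by simp
  have poi: "prob_on_interval (f i t)" if "i < N" "0 \<le> t" for i t using f_prob that .
  have cont_m: "continuous_on {0..} (mNS j)" if "j < N" for j
  proof -
    have "continuous_on {0..} (\<lambda>t. \<integral>w. w \<partial>(f j t))"
      using f_cont[OF that] unfolding weak_continuous_on_def by (auto intro: continuous_on_id)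
    thus ?thesis unfolding mNS_def .
  qed
  have cont_Q: "continuous_on {0..} (Q j)" if "j < N" for j
  proof -
    have c2: "continuous_on UNIV (\<lambda>w::real. w^2)" by (intro continuous_intros)
    have "\<forall>\<phi>::real\<Rightarrow>real. continuous_on UNIV \<phi> \<longrightarrow> continuous_on {0..} (\<lambda>t. \<integral>w. \<phi> w \<partial>(f j t))"
      using f_cont[OF that] unfolding weak_continuous_on_def .
    from this[rule_format, OF c2] have "continuous_on {0..} (\<lambda>t. \<integral>w. w^2 \<partial>(f j t))" .
    thus ?thesis unfolding Q_def .
  qed
  have cont_P: "continuous_on {0..} (P i)" for i
    unfolding P_def m_def \<beta>_def
    by (intro continuous_intros continuous_on_sum ballI continuous_on_mult_left) (use cont_m in auto)
  have cont_G: "continuous_on {0..} (G i)" if "i < N" for i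
    unfolding G_def by (intro continuous_intros cont_P cont_m that)
  have cont_H: "continuous_on {0..} (H i)" if "i < N" for i
    unfolding H_def by (intro continuous_intros cont_P cont_m cont_Q that)
  have int1: "(\<integral>w. 1 * (p * (m s - w) + (1 - p) * (\<beta> i s - F0up i * w)) \<partial>(f i s)) = G i s"
    if "i < N" "0 \<le> s" for i s
  proof -
    interpret prob_space "f i s" using poi[OF that] by (simp add: prob_on_interval_def)
    have i1: "integrable (f i s) (\<lambda>w. w)" by (rule poi_int[OF poi[OF that]]) (intro continuous_intros)
    have "(\<lambda>w. 1 * (p * (m s - w) + (1 - p) * (\<beta> i s - F0up i * w))) = (\<lambda>w. P i s - c i * w)"
      by (rule ext) (simp add: P_def c_def algebra_simps)
    hence "(\<integral>w. 1 * (p * (m s - w) + (1 - p) * (\<beta> i s - F0up i * w)) \<partial>(f i s)) = (\<integral>w. P i s - c i * w \<partial>(f i s))"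
      by simp
    also have "\<dots> = P i s - c i * mNS i s"
      using i1 by (simp add: prob_space mNS_def)
    finally show ?thesis unfolding G_def .
  qed
  have int2: "(\<integral>w. (2 * w) * (p * (m s - w) + (1 - p) * (\<beta> i s - F0up i * w)) \<partial>(f i s)) = H i s"
    if "i < N" "0 \<le> s" for i s
  proof -
    interpret prob_space "f i s" using poi[OF that] by (simp add: prob_on_interval_def)
    have i1: "integrable (f i s) (\<lambda>w. w)" by (rule poi_int[OF poi[OF that]]) (intro continuous_intros)
    have i2: "integrable (f i s) (\<lambda>w. w^2)" by (rule poi_int[OF poi[OF that]]) (intro continuous_intros)
    have "(\<lambda>w. (2 * w) * (p * (m s - w) + (1 - p) * (\<beta> i s - F0up i * w))) = (\<lambda>w. (2 * P i s) * w - (2 * c i) * w^2)"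
      by (rule ext) (simp add: P_def c_def algebra_simps power2_eq_square)
    hence "(\<integral>w. (2 * w) * (p * (m s - w) + (1 - p) * (\<beta> i s - F0up i * w)) \<partial>(f i s)) = (\<integral>w. (2 * P i s) * w - (2 * c i) * w^2 \<partial>(f i s))"
      by simp
    also have "\<dots> = 2 * P i s * mNS i s - 2 * c i * Q i s"
      using i1 i2 by (simp add: mNS_def Q_def)
    finally show ?thesis unfolding H_def .
  qed
  have eqm: "mNS i t = mNS i 0 + integral {0..t} (G i)" if "i < N" "0 \<le> t" for i t
  proof -
    have "(\<integral>w. w \<partial>(f i t)) = (\<integral>w. w \<partial>(f0 i)) +
          integral {0..t} (\<lambda>s. \<integral>w. 1 * (p * (m s - w) + (1 - p) * (\<beta> i s - F0up i * w)) \<partial>(f i s))"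
      by (rule f_eq[OF that]) (auto intro: DERIV_ident)
    also have "integral {0..t} (\<lambda>s. \<integral>w. 1 * (p * (m s - w) + (1 - p) * (\<beta> i s - F0up i * w)) \<partial>(f i s)) = integral {0..t} (G i)"
      by (rule Henstock_Kurzweil_Integration.integral_cong) (use int1[OF that(1)] in auto)
    finally show ?thesis unfolding mNS_def f_init[OF that(1)] .
  qed
  have eqQ: "Q i t = Q i 0 + integral {0..t} (H i)" if "i < N" "0 \<le> t" for i t
  proof -
    have d: "((\<lambda>w. w^2) has_real_derivative 2 * w) (at w)" for w :: real
      using DERIV_pow[of 2 w UNIV] by simp
    have "(\<integral>w. w^2 \<partial>(f i t)) = (\<integral>w. w^2 \<partial>(f0 i)) +
          integral {0..t} (\<lambda>s. \<integral>w. (2 * w) * (p * (m s - w) + (1 - p) * (\<beta> i s - F0up i * w)) \<partial>(f i s))"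
      by (rule f_eq[OF that]) (auto intro: d continuous_intros)
    also have "integral {0..t} (\<lambda>s. \<integral>w. (2 * w) * (p * (m s - w) + (1 - p) * (\<beta> i s - F0up i * w)) \<partial>(f i s)) = integral {0..t} (H i)"
      by (rule Henstock_Kurzweil_Integration.integral_cong) (use int2[OF that(1)] in auto)
    finally show ?thesis unfolding Q_def f_init[OF that(1)] .
  qed
  have dm: "(mNS i has_real_derivative G i t) (at t)" if "i < N" "0 < t" for i t
    by (rule ftc_deriv[OF _ cont_G[OF that(1)] that(2)]) (rule eqm[OF that(1)])
  have dQ: "(Q i has_real_derivative H i t) (at t)" if "i < N" "0 < t" for i t
    by (rule ftc_deriv[OF _ cont_H[OF that(1)] that(2)]) (rule eqQ[OF that(1)])
  have G_lin: "G i s = (\<Sum>j<N. a i j * mNS j s) + Bv i" if "i < N" for i s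
  proof -
    have "(\<Sum>j<N. a i j * mNS j s) = (1 - \<alpha>) * (p * (\<Sum>j<N. fNS j * mNS j s) + (1 - p) * (\<Sum>j\<in>{i..<N}. fNS j * mNS j s)) - c i * mNS i s"
      by (rule a_sum[OF that])
    moreover have "Bv i = \<alpha> * (p * (\<Sum>j<N. fS j * mS j) + (1 - p) * (\<Sum>j\<in>{i..<N}. fS j * mS j))"
    proof -
      have "(\<Sum>j<N. mS j * (p + (1 - p) * (if j \<ge> i then 1 else 0)) * fS j) = (\<Sum>j<N. (p + (1 - p) * (if i \<le> j then 1 else 0)) * (fS j * mS j))"
        by (intro sum.cong refl) (simp add: ac_simps)
      thus ?thesis unfolding Bv_def sum_ind' by simp
    qed
    ultimately show ?thesis
      unfolding G_def P_def m_def \<beta>_def by (simp add: algebra_simps)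
  qed
  have Av: "(A *\<^sub>v v) $ i = (\<Sum>j<N. a i j * v $ j)" if "i < N" "v \<in> carrier_vec N" for i v
  proof -
    have "(A *\<^sub>v v) $ i = row A i \<bullet> v" using that Acar by simp
    also have "\<dots> = (\<Sum>j\<in>{0..<N}. row A i $ j * v $ j)" using that by (simp add: scalar_prod_def)
    also have "\<dots> = (\<Sum>j<N. a i j * v $ j)"
      using that Acar by (intro sum.cong) (auto simp: Aij)
    finally show ?thesis .
  qed
  have ker: "v = 0\<^sub>v N" if v: "v \<in> carrier_vec N" "A *\<^sub>v v = 0\<^sub>v N" for v
  proof (rule eq_vecI)
    show "dim_vec v = dim_vec (0\<^sub>v N)" using v by simp
    fix i assume "i < dim_vec (0\<^sub>v N)"
    hence i: "i < N" by simp
    have z: "(\<Sum>k<N. a j k * v $ k) = 0" if "j < N" for j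
      using Av[OF that v(1)] v(2) that by simp
    have "((\<lambda>t::real. v $ i) \<longlongrightarrow> 0) at_top"
    proof (rule stab_abs[where n=N and a=a and \<gamma>="\<alpha> * p" and x="\<lambda>j (t::real). v $ j" and i=i])
      show "continuous_on {0..} (\<lambda>t. v $ j)" for j by simp
      show "((\<lambda>t. v $ j) has_real_derivative (\<Sum>k<N. a j k * v $ k)) (at t)" if "j < N" "0 < t" for j t
        using z[OF that(1)] by simp
    qed (use offd rows gam i in auto)
    hence "v $ i = 0" by (simp add: tendsto_const_iff)
    thus "v $ i = 0\<^sub>v N $ i" using i by simp
  qed
  have detA: "Determinant.det A \<noteq> 0"
    using det_0_iff_vec_prod_zero_field[OF Acar] ker by blast
  have unitA: "A \<in> Units (ring_mat TYPE(real) N ())" by (rule det_non_zero_imp_unit[OF Acar detA])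
  obtain Ai where Ai: "mat_inverse A = Some Ai"
  proof (cases "mat_inverse A")
    case None
    thus ?thesis using mat_inverse(1)[OF Acar, of "()"] unitA by blast
  qed
  have AiP: "A * Ai = 1\<^sub>m N" "Ai * A = 1\<^sub>m N" "Ai \<in> carrier_mat N N"
    using mat_inverse(2)[OF Acar Ai] by auto
  have inv: "invertible_mat A"
    unfolding invertible_mat_def inverts_mat_def using Acar AiP by auto
  define minf where "minf = - (the (mat_inverse A) *\<^sub>v B)"
  have minf_eq: "minf = - (Ai *\<^sub>v B)" unfolding minf_def Ai by simp
  have AiB: "Ai *\<^sub>v B \<in> carrier_vec N" using AiP(3) Bcar by simp
  have stat: "(\<Sum>j<N. a i j * minf $ j) = - Bv i" if i: "i < N" for i
  proof -
    have "(\<Sum>j<N. a i j * minf $ j) = - (\<Sum>j<N. a i j * (Ai *\<^sub>v B) $ j)"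
      unfolding minf_eq using AiP(3) by (simp add: sum_negf)
    also have "(\<Sum>j<N. a i j * (Ai *\<^sub>v B) $ j) = (A *\<^sub>v (Ai *\<^sub>v B)) $ i"
      by (rule Av[OF i AiB, symmetric])
    also have "A *\<^sub>v (Ai *\<^sub>v B) = (A * Ai) *\<^sub>v B"
      using Acar AiP(3) Bcar by (simp add: assoc_mult_mat_vec)
    also have "\<dots> = B" using AiP(1) Bcar by simp
    finally show ?thesis using Bi[OF i] by simp
  qed
  have mean_conv: "((\<lambda>t. mNS i t) \<longlongrightarrow> minf $ i) at_top" if i: "i < N" for i
  proof -
    have "((\<lambda>t. mNS i t - minf $ i) \<longlongrightarrow> 0) at_top"
    proof (rule stab_abs[where x="\<lambda>j t. mNS j t - minf $ j", OF offd rows gam _ _ i])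
      show "continuous_on {0..} (\<lambda>t. mNS j t - minf $ j)" if "j < N" for j
        by (intro continuous_intros cont_m that)
      show "((\<lambda>t. mNS j t - minf $ j) has_real_derivative (\<Sum>k<N. a j k * (mNS k t - minf $ k))) (at t)"
        if "j < N" "0 < t" for j t
      proof -
        have "(\<Sum>k<N. a j k * (mNS k t - minf $ k)) = (\<Sum>k<N. a j k * mNS k t) - (\<Sum>k<N. a j k * minf $ k)"
          by (simp add: algebra_simps sum_subtractf)
        also have "\<dots> = G j t" using stat[OF that(1)] G_lin[OF that(1)] by simp
        finally have e: "(\<Sum>k<N. a j k * (mNS k t - minf $ k)) = G j t" .
        show ?thesis unfolding e using DERIV_diff[OF dm[OF that] DERIV_const[of "minf $ j" "at t"]] by simp
      qed
    qed auto
    thus ?thesis using tendsto_add[OF _ tendsto_const[of "minf $ i"]] by (simp add: LIM_zero_iff)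
  qed
  have var_conv: "((\<lambda>t. Q i t - (mNS i t)^2) \<longlongrightarrow> 0) at_top" if i: "i < N" for i
  proof -
    have cp: "0 < 2 * c i" using cpos[of i] p by simp
    have "((\<lambda>t. (\<lambda>_ t. Q i t - (mNS i t)^2) (0::nat) t) \<longlongrightarrow> 0) at_top"
    proof (rule stab_abs[where n="Suc 0" and a="\<lambda>_ _. - (2 * c i)" and \<gamma>="2 * c i" and x="\<lambda>_ t. Q i t - (mNS i t)^2" and i=0])
      show "continuous_on {0..} (\<lambda>t. Q i t - (mNS i t)^2)" if "j < Suc 0" for j
        by (intro continuous_intros cont_Q cont_m i)
      show "((\<lambda>t. Q i t - (mNS i t)^2) has_real_derivative (\<Sum>k<Suc 0. - (2 * c i) * (Q i t - (mNS i t)^2))) (at t)"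
        if "j < Suc 0" "0 < t" for j t
      proof -
        have d: "((\<lambda>t. Q i t - (mNS i t)^2) has_real_derivative H i t - 2 * mNS i t * G i t) (at t)"
          using DERIV_diff[OF dQ[OF i that(2)] DERIV_power[OF dm[OF i that(2)], of 2]] by (simp add: algebra_simps)
        have e1: "H i t - 2 * mNS i t * G i t = - (2 * c i) * (Q i t - (mNS i t)^2)"
          unfolding H_def G_def by (simp add: algebra_simps power2_eq_square)
        have e2: "(\<Sum>k<(1::nat). - (2 * c i) * (Q i t - (mNS i t)^2)) = - (2 * c i) * (Q i t - (mNS i t)^2)"
          by simp
        have d': "((\<lambda>t. Q i t - (mNS i t)^2) has_real_derivative - (2 * c i) * (Q i t - (mNS i t)^2)) (at t)"
          using d unfolding e1 .
        show ?thesis by (rule DERIV_cong[OF d']) simp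
      qed
    qed (use cp in auto)
    thus ?thesis by simp
  qed
  have Q_conv: "((\<lambda>t. \<integral>w. w^2 \<partial>(f i t)) \<longlongrightarrow> (minf $ i)^2) at_top" if i: "i < N" for i
  proof -
    have "((\<lambda>t. (Q i t - (mNS i t)^2) + (mNS i t)^2) \<longlongrightarrow> 0 + (minf $ i)^2) at_top"
      by (intro tendsto_intros var_conv mean_conv i)
    thus ?thesis unfolding Q_def by simp
  qed
  have weak: "weak_conv_at_top (f i) (dirac (minf $ i))" if i: "i < N" for i
  proof (rule weak_from_moments)
    show "eventually (\<lambda>t. prob_on_interval (f i t)) at_top"
      using eventually_ge_at_top[of 0] by eventually_elim (rule poi[OF i])
    show "((\<lambda>t. \<integral>w. w \<partial>(f i t)) \<longlongrightarrow> minf $ i) at_top" using mean_conv[OF i] unfolding mNS_def .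
    show "((\<lambda>t. \<integral>w. w^2 \<partial>(f i t)) \<longlongrightarrow> (minf $ i)^2) at_top" by (rule Q_conv[OF i])
  qed
  show ?thesis unfolding Let_def minf_def[symmetric] using inv weak by blast
qed

end
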